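(* Let $V$ be a finite vocabulary, $U\in\mathbb{R}^{|V|\times d}$, $u_t=U^\top e_t$, and let $r\in\mathbb{R}^d$ be the unsteered final representation of a query $q$, with $P_\theta(t\mid q)=\mathrm{softmax}(Ur)_t$. Let $c\in V$ be the correct answer token, $P_0=P_\theta(c\mid q)<1$. Let $S\subseteq V$ with $c\in S$ and $|S|=T\ge 3$, and define $\epsilon\in[0,1)$ by $\sum_{i\in S\setminus\{c\}}P_\theta(i\mid q)=(1-\epsilon)(1-P_0)$ (assume this sum is positive). Let $r_e\neq 0$ and let the steered distribution be $P_{\theta,r_e}(t\mid q)=\mathrm{softmax}(U(r+d))_t$ where $d=\lambda|r_e|\,v$, $\lambda>0$, and $v$ is a random unit vector such that the random variables $X_i=\langle v,u_i\rangle$, $i\in S$, are i.i.d. with a continuous distribution of variance $\sigma^2>0$. Define $I_\pm=\{i\in S\setminus\{c\}:\pm(X_i-X_c)>0\}$, $P_\pm=\sum_{i\in I_\pm}P_\theta(i\mid q)$, and when $I_\pm\neq\emptyset$, $c_\pm=\frac{1}{P_\pm}\sum_{i\in I_\pm}P_\theta(i\mid q)(X_i-X_c)$; set $$\alpha=\frac{\min\{P_+,P_-\}}{(1-P_0)(1-\epsilon)},\qquad \beta=\frac{\min\{|c_-|,c_+\}}{\sigma}.$$ Then with probability at least $1-\frac{2}{T}$ (over the randomness of $v$), both $I_+$ and $I_-$ are nonempty, $\alpha>0$, $\beta>0$, and $$P_{\theta,r_e}(c\mid q)\le\frac{P_0}{P_0+(1-P_0)\,\alpha(1-\epsilon)\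big(1+\tfrac{\lambda^2\sigma^2\beta^2}{2}r_e^2\big)}.$$
   Context: Helpfulness of a model on a query $q$ with correct answer $c$ is the probability $P(c\mid q)$ the model assigns to the correct answer. Steering with coefficient $r_e$ changes the final hidden representation by $d$ with $|d|=\lambda|r_e|$; the direction of $d$ is modeled as random relative to the unembeddings of the $T$ tokens in $S$ (typically the highest-probability tokens, carrying most of the mass). *)

theory Defs
  imports "HOL-Probability.Probability"
begin

definition softmax :: "real ^ 'v::finite \<Rightarrow> 'v \<Rightarrow> real" where
  "softmax z t = exp (z $ t) / (\<Sum>s\<in>UNIV. exp (z $ s))"

definition Iplus :: "'v set \<Rightarrow> 'v \<Rightarrow> ('v \<Rightarrow> real) \<Rightarrow> 'v set" where
  "Iplus S c X = {i \<in> S - {c}. X i - X c > 0}"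

definition Iminus :: "'v set \<Rightarrow> 'v \<Rightarrow> ('v \<Rightarrow> real) \<Rightarrow> 'v set" where
  "Iminus S c X = {i \<in> S - {c}. X i - X c < 0}"

definition Pmass :: "('v \<Rightarrow> real) \<Rightarrow> 'v set \<Rightarrow> real" where
  "Pmass p I = (\<Sum>i\<in>I. p i)"

text \<open>Weighted mean of X_i - X_c over I (meaningful when I is nonempty).\<close>
definition cmean :: "('v \<Rightarrow> real) \<Rightarrow> ('v \<Rightarrow> real) \<Rightarrow> 'v \<Rightarrow> 'v set \<Rightarrow> real" where
  "cmean p X c I = (1 / Pmass p I) * (\<Sum>i\<in>I. p i * (X i - X c))"

end

theory Submission
  imports Defs
begin

lemma mv_shift: fixes U :: "real ^ 'd::finite ^ 'v::finite"
  shows "(U *v (r + k *\<^sub>R w)) $ t = (U *v r) $ t + k * (w \<bullet> (U $ t))"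
  by (simp add: matrix_vector_mult_def inner_vec_def sum.distrib sum_distrib_left algebra_simps)

lemma softmax_pos: "softmax z t > 0"
  unfolding softmax_def by (intro divide_pos_pos) (auto intro!: sum_pos)

lemma softmax_shift:
  fixes U :: "real ^ 'd::finite ^ 'v::finite"
  shows "softmax (U *v (r + k *\<^sub>R w)) c =
     softmax (U *v r) c / (\<Sum>t\<in>UNIV. softmax (U *v r) t * exp (k * (w \<bullet> (U $ t) - w \<bullet> (U $ c))))"
proof -
  define Z where "Z = (\<Sum>s\<in>UNIV. exp ((U *v r) $ s))"
  define S' where "S' = (\<Sum>t\<in>UNIV. exp ((U *v (r + k *\<^sub>R w)) $ t))"
  define E where "E = exp (k * (w \<bullet> (U $ c)))"
  define D where "D = (\<Sum>t\<in>UNIV. softmax (U *v r) t * exp (k * (w \<bullet> (U $ t) - w \<bullet> (U $ c))))"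
  have Z: "Z > 0" unfolding Z_def by (auto intro!: sum_pos)
  have E: "E > 0" unfolding E_def by simp
  have S: "S' > 0" unfolding S'_def by (auto intro!: sum_pos)
  have e: "exp ((U *v r) $ t) * exp (k * (w \<bullet> (U $ t) - w \<bullet> (U $ c))) =
      exp ((U *v (r + k *\<^sub>R w)) $ t) / E" for t
    by (simp add: E_def mv_shift exp_diff exp_add right_diff_distrib)
  have "D = (\<Sum>t\<in>UNIV. exp ((U *v (r + k *\<^sub>R w)) $ t) / E) / Z"
    unfolding D_def softmax_def Z_def[symmetric] using e
    by (simp add: sum_divide_distrib)
  also have "\<dots> = S' / (Z * E)" unfolding S'_def by (simp add: sum_divide_distrib[symmetric])
  finally have D: "D = S' / (Z * E)" .
  have L: "softmax (U *v (r + k *\<^sub>R w)) c = exp ((U *v r) $ c) * E / S'"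
    unfolding softmax_def S'_def E_def by (simp add: mv_shift exp_add)
  show ?thesis
    unfolding D_def[symmetric] L D unfolding softmax_def Z_def[symmetric]
    using Z E S by (simp add: field_simps)
qed

lemma tangent_sum:
  fixes P D :: "'v \<Rightarrow> real"
  assumes "finite I" "(\<Sum>i\<in>I. P i) > 0" "\<forall>i. P i > 0"
  shows "(\<Sum>i\<in>I. P i * exp (k * D i)) \<ge>
     (\<Sum>i\<in>I. P i) * exp (k * ((1 / (\<Sum>i\<in>I. P i)) * (\<Sum>i\<in>I. P i * D i)))"
proof -
  define Pm where "Pm = (\<Sum>i\<in>I. P i)"
  define cm where "cm = (1 / Pm) * (\<Sum>i\<in>I. P i * D i)"
  have cmP: "cm * Pm = (\<Sum>i\<in>I. P i * D i)" unfolding cm_def using assms(2) Pm_def by simp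
  have "\<And>i. i \<in> I \<Longrightarrow> P i * (exp (k*cm) * (1 + (k * D i - k * cm))) \<le> P i * exp (k * D i)"
  proof -
    fix i
    have "exp (k*cm) * (1 + (k * D i - k * cm)) \<le> exp (k*cm) * exp (k * D i - k * cm)"
      by (intro mult_left_mono exp_ge_add_one_self) auto
    also have "\<dots> = exp (k * D i)" by (simp add: exp_diff)
    finally show "P i * (exp (k*cm) * (1 + (k * D i - k * cm))) \<le> P i * exp (k * D i)"
      using assms(3) by (intro mult_left_mono) (auto simp: less_imp_le)
  qed
  hence "(\<Sum>i\<in>I. P i * (exp (k*cm) * (1 + (k * D i - k * cm)))) \<le> (\<Sum>i\<in>I. P i * exp (k * D i))"
    by (rule sum_mono)
  moreover have "(\<Sum>i\<in>I. P i * (exp (k*cm) * (1 + (k * D i - k * cm)))) =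
      exp (k*cm) * (Pm + k * (\<Sum>i\<in>I. P i * D i) - k * cm * Pm)"
    unfolding Pm_def by (simp add: algebra_simps sum.distrib sum_distrib_left sum_distrib_right sum_subtractf)
  moreover have "exp (k*cm) * (Pm + k * (\<Sum>i\<in>I. P i * D i) - k * cm * Pm) = Pm * exp (k * cm)"
    using cmP by (simp add: algebra_simps)
  ultimately have "Pm * exp (k * cm) \<le> (\<Sum>i\<in>I. P i * exp (k * D i))" by linarith
  then show ?thesis unfolding Pm_def cm_def .
qed


lemma mass_pos:
  fixes P Xw :: "'v::finite \<Rightarrow> real"
  assumes "\<forall>t. P t > 0" "I \<noteq> {}"
  shows "Pmass P I > 0"
  unfolding Pmass_def using assms by (intro sum_pos) auto

lemma cmean_plus_pos:
  fixes P Xw :: "'v::finite \<Rightarrow> real"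
  assumes "\<forall>t. P t > 0" "Iplus S c Xw \<noteq> {}"
  shows "cmean P Xw c (Iplus S c Xw) > 0"
proof -
  have "(\<Sum>i\<in>Iplus S c Xw. P i * (Xw i - Xw c)) > 0"
    using assms by (intro sum_pos) (auto simp: Iplus_def)
  then show ?thesis using mass_pos[OF assms] unfolding cmean_def by simp
qed

lemma cmean_minus_neg:
  fixes P Xw :: "'v::finite \<Rightarrow> real"
  assumes "\<forall>t. P t > 0" "Iminus S c Xw \<noteq> {}"
  shows "cmean P Xw c (Iminus S c Xw) < 0"
proof -
  have "(\<Sum>i\<in>Iminus S c Xw. - (P i * (Xw i - Xw c))) > 0"
    using assms by (intro sum_pos) (auto simp: Iminus_def mult_pos_neg)
  hence "(\<Sum>i\<in>Iminus S c Xw. P i * (Xw i - Xw c)) < 0" by (simp add: sum_negf)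
  then show ?thesis using mass_pos[OF assms] unfolding cmean_def by (simp add: divide_neg_pos)
qed

lemma det_bound:
  fixes P Xw :: "'v::finite \<Rightarrow> real"
  assumes Ppos: "\<forall>t. P t > 0" and k: "k \<ge> 0"
    and ne: "Iplus S c Xw \<noteq> {}" "Iminus S c Xw \<noteq> {}"
  shows "P c / (\<Sum>t\<in>UNIV. P t * exp (k * (Xw t - Xw c))) \<le>
     P c / (P c + min (Pmass P (Iplus S c Xw)) (Pmass P (Iminus S c Xw)) *
       (1 + (k * min \<bar>cmean P Xw c (Iminus S c Xw)\<bar> (cmean P Xw c (Iplus S c Xw)))\<^sup>2 / 2))"
proof -
  define Ip where "Ip = Iplus S c Xw"
  define Im where "Im = Iminus S c Xw"
  define cp where "cp = cmean P Xw c Ip"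
  define cn where "cn = cmean P Xw c Im"
  define m where "m = min \<bar>cn\<bar> cp"
  define f where "f = (\<lambda>t. P t * exp (k * (Xw t - Xw c)))"
  have fpos: "f t > 0" for t unfolding f_def using Ppos by simp
  have cp: "cp > 0" unfolding cp_def Ip_def by (rule cmean_plus_pos[OF Ppos ne(1)])
  have mp: "Pmass P Ip > 0" unfolding Ip_def by (rule mass_pos[OF Ppos ne(1)])
  have m0: "0 \<le> m" "m \<le> cp" using cp unfolding m_def by auto
  have disj: "Ip \<inter> Im = {}" "c \<notin> Ip" "c \<notin> Im" unfolding Ip_def Im_def Iplus_def Iminus_def by auto
  have "(\<Sum>t\<in>UNIV. f t) \<ge> (\<Sum>t\<in>insert c (Ip \<union> Im). f t)"
    by (intro sum_mono2) (auto simp: less_imp_le fpos)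
  also have "(\<Sum>t\<in>insert c (Ip \<union> Im). f t) = f c + (\<Sum>t\<in>Ip. f t) + (\<Sum>t\<in>Im. f t)"
    using disj by (simp add: sum.union_disjoint)
  finally have s1: "(\<Sum>t\<in>UNIV. f t) \<ge> P c + (\<Sum>t\<in>Ip. f t)"
    using fpos by (simp add: f_def) (smt (verit) sum_nonneg fpos)
  have "(\<Sum>t\<in>Ip. f t) \<ge> Pmass P Ip * exp (k * cp)"
    using tangent_sum[of Ip P k "\<lambda>i. Xw i - Xw c"] mp Ppos
    unfolding f_def Pmass_def cp_def cmean_def by simp
  also have "Pmass P Ip * exp (k * cp) \<ge> Pmass P Ip * (1 + (k*cp)\<^sup>2/2)"
  proof -
    have "1 + (k*cp)\<^sup>2/2 \<le> 1 + k*cp + (k*cp)\<^sup>2/2" using k cp by simp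
    also have "\<dots> \<le> exp (k*cp)" by (rule exp_lower_Taylor_quadratic) (use k cp in simp)
    finally show ?thesis using mp by simp
  qed
  also have "Pmass P Ip * (1 + (k*cp)\<^sup>2/2) \<ge> min (Pmass P Ip) (Pmass P Im) * (1 + (k*m)\<^sup>2/2)"
  proof (rule mult_mono)
    show "1 + (k * m)\<^sup>2 / 2 \<le> 1 + (k * cp)\<^sup>2 / 2"
      using m0 k by (simp add: power_mono mult_left_mono)
  qed (auto simp: mp less_imp_le)
  finally have s2: "P c + min (Pmass P Ip) (Pmass P Im) * (1 + (k*m)\<^sup>2/2) \<le> (\<Sum>t\<in>UNIV. f t)"
    using s1 by linarith
  have pos: "0 < P c + min (Pmass P Ip) (Pmass P Im) * (1 + (k*m)\<^sup>2/2)"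
    using Ppos mass_pos[OF Ppos ne(2)] mp unfolding Im_def[symmetric]
    by (intro add_pos_nonneg mult_nonneg_nonneg) (auto intro: add_nonneg_nonneg)
  show ?thesis
    using frac_le[OF less_imp_le[OF Ppos[rule_format, of c]] order.refl pos s2]
    unfolding f_def Ip_def Im_def m_def cp_def cn_def by simp
qed

lemma (in prob_space) indep_sets_reindex:
  assumes ind: "indep_sets F I" and bij: "bij_betw \<sigma> J I"
  shows "indep_sets (\<lambda>j. F (\<sigma> j)) J"
  unfolding indep_sets_def
proof (intro conjI allI impI ballI)
  fix j assume "j \<in> J"
  then show "F (\<sigma> j) \<subseteq> events" using ind bij unfolding indep_sets_def bij_betw_def by auto
next
  fix K A assume K: "K \<subseteq> J" "K \<noteq> {}" "finite K" and A: "A \<in> (\<Pi> j\<in>K. F (\<sigma> j))"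
  have inj: "inj_on \<sigma> K" using bij K(1) unfolding bij_betw_def by (auto intro: inj_on_subset)
  define A' where "A' = (\<lambda>i. A (the_inv_into K \<sigma> i))"
  have A'\<sigma>: "A' (\<sigma> k) = A k" if "k \<in> K" for k
    unfolding A'_def using the_inv_into_f_f[OF inj that] by simp
  have sub: "\<sigma> ` K \<subseteq> I" using bij K(1) unfolding bij_betw_def by auto
  have "A' \<in> (\<Pi> i\<in>\<sigma> ` K. F i)" using A A'\<sigma> by auto
  then have "prob (\<Inter>i\<in>\<sigma> ` K. A' i) = (\<Prod>i\<in>\<sigma> ` K. prob (A' i))"
    using ind sub K unfolding indep_sets_def by auto
  moreover have "(\<Inter>i\<in>\<sigma> ` K. A' i) = (\<Inter>k\<in>K. A k)" using A'\<sigma> by (auto simp: image_image)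
  moreover have "(\<Prod>i\<in>\<sigma> ` K. prob (A' i)) = (\<Prod>k\<in>K. prob (A k))"
    using A'\<sigma> by (simp add: prod.reindex[OF inj])
  ultimately show "prob (\<Inter>k\<in>K. A k) = (\<Prod>k\<in>K. prob (A k))" by simp
qed

lemma (in prob_space) indep_vars_reindex:
  assumes ind: "indep_vars M' X I" and bij: "bij_betw \<sigma> J I"
  shows "indep_vars (\<lambda>j. M' (\<sigma> j)) (\<lambda>j. X (\<sigma> j)) J"
  using ind bij indep_sets_reindex[of "\<lambda>i. { X i -` A \<inter> space M | A. A \<in> sets (M' i)}" I \<sigma> J]
  unfolding indep_vars_def2 bij_betw_def by auto


lemma (in prob_space) strict_extreme_eq:
  fixes Y :: "'i \<Rightarrow> 'a \<Rightarrow> real" and s :: real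
  assumes ind: "indep_vars (\<lambda>_. borel) Y S" and fin: "finite S" and c: "c \<in> S" and j: "j \<in> S"
    and dist: "\<forall>i\<in>S. distr M borel (Y i) = distr M borel (Y c)"
  shows "prob {\<omega>\<in>space M. \<forall>i\<in>S-{j}. s * Y i \<omega> < s * Y j \<omega>} =
         prob {\<omega>\<in>space M. \<forall>i\<in>S-{c}. s * Y i \<omega> < s * Y c \<omega>}"
proof -
  define \<sigma> where "\<sigma> i = (if i = c then j else if i = j then c else i)" for i
  have \<sigma>\<sigma>: "\<sigma> (\<sigma> i) = i" for i unfolding \<sigma>_def by auto
  have \<sigma>S: "i \<in> S \<Longrightarrow> \<sigma> i \<in> S" for i using c j unfolding \<sigma>_def by auto
  have bij: "bij_betw \<sigma> S S" by (rule bij_betwI[where g=\<sigma>]) (auto simp: \<sigma>\<sigma> \<sigma>S)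
  define Z where "Z i = Y (\<sigma> i)" for i
  have indZ: "indep_vars (\<lambda>_. borel) Z S"
    using indep_vars_reindex[OF ind bij] unfolding Z_def by simp
  have rvY: "random_variable borel (Y i)" if "i \<in> S" for i
    using ind that unfolding indep_vars_def by auto
  have rvZ: "random_variable borel (Z i)" if "i \<in> S" for i
    using indZ that unfolding indep_vars_def by auto
  define N where "N = (\<Pi>\<^sub>M i\<in>S. (borel :: real measure))"
  define \<mu> where "\<mu> = distr M borel (Y c)"
  have S0: "S \<noteq> {}" using c by auto
  have dY: "distr M N (\<lambda>x. \<lambda>i\<in>S. Y i x) = (\<Pi>\<^sub>M i\<in>S. \<mu>)"
  proof -
    have "distr M N (\<lambda>x. \<lambda>i\<in>S. Y i x) = (\<Pi>\<^sub>M i\<in>S. distr M borel (Y i))"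
      using indep_vars_iff_distr_eq_PiM'[OF S0, where M'="\<lambda>_. borel" and X=Y] rvY ind unfolding N_def by simp
    also have "\<dots> = (\<Pi>\<^sub>M i\<in>S. \<mu>)" unfolding \<mu>_def by (rule PiM_cong) (use dist in auto)
    finally show ?thesis .
  qed
  have dZ: "distr M N (\<lambda>x. \<lambda>i\<in>S. Z i x) = (\<Pi>\<^sub>M i\<in>S. \<mu>)"
  proof -
    have "distr M N (\<lambda>x. \<lambda>i\<in>S. Z i x) = (\<Pi>\<^sub>M i\<in>S. distr M borel (Z i))"
      using indep_vars_iff_distr_eq_PiM'[OF S0, where M'="\<lambda>_. borel" and X=Z] rvZ indZ unfolding N_def by simp
    also have "\<dots> = (\<Pi>\<^sub>M i\<in>S. \<mu>)" unfolding \<mu>_def Z_def by (rule PiM_cong) (use dist \<sigma>S in auto)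
    finally show ?thesis .
  qed
  define B where "B = {x\<in>space N. \<forall>i\<in>S-{c}. s * x i < s * x c}"
  have predB: "Measurable.pred N (\<lambda>x. \<forall>i\<in>S-{c}. s * x i < s * x c)"
    unfolding N_def
  proof (rule pred_intros_finite)
    show "finite (S - {c})" using fin by simp
    fix i assume "i \<in> S - {c}"
    then have [measurable]: "(\<lambda>x. x i) \<in> borel_measurable (\<Pi>\<^sub>M i\<in>S. (borel :: real measure))"
      by (intro measurable_component_singleton) auto
    have [measurable]: "(\<lambda>x. x c) \<in> borel_measurable (\<Pi>\<^sub>M i\<in>S. (borel :: real measure))"
      using c by (intro measurable_component_singleton) auto
    show "Measurable.pred (\<Pi>\<^sub>M i\<in>S. (borel :: real measure)) (\<lambda>x. s * x i < s * x c)"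
      by measurable
  qed
  have B: "B \<in> sets N" unfolding B_def using predB by (simp add: pred_def)
  have mY: "(\<lambda>x. \<lambda>i\<in>S. Y i x) \<in> measurable M N" unfolding N_def
    by (intro measurable_restrict rvY)
  have mZ: "(\<lambda>x. \<lambda>i\<in>S. Z i x) \<in> measurable M N" unfolding N_def
    by (intro measurable_restrict rvZ)
  have "prob ((\<lambda>x. \<lambda>i\<in>S. Y i x) -` B \<inter> space M) = measure (\<Pi>\<^sub>M i\<in>S. \<mu>) B"
    using measure_distr[OF mY B] dY by simp
  moreover have "prob ((\<lambda>x. \<lambda>i\<in>S. Z i x) -` B \<inter> space M) = measure (\<Pi>\<^sub>M i\<in>S. \<mu>) B"
    using measure_distr[OF mZ B] dZ by simp
  moreover have "(\<lambda>x. \<lambda>i\<in>S. Y i x) -` B \<inter> space M = {\<omega>\<in>space M. \<forall>i\<in>S-{c}. s * Y i \<omega> < s * Y c \<omega>}"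
    unfolding B_def N_def using c by (auto simp: space_PiM)
  moreover have "(\<lambda>x. \<lambda>i\<in>S. Z i x) -` B \<inter> space M = {\<omega>\<in>space M. \<forall>i\<in>S-{j}. s * Y i \<omega> < s * Y j \<omega>}"
  proof -
    have "(\<forall>i\<in>S-{c}. s * Y (\<sigma> i) \<omega> < s * Y j \<omega>) \<longleftrightarrow> (\<forall>i\<in>S-{j}. s * Y i \<omega> < s * Y j \<omega>)" for \<omega>
    proof
      assume H: "\<forall>i\<in>S-{c}. s * Y (\<sigma> i) \<omega> < s * Y j \<omega>"
      show "\<forall>i\<in>S-{j}. s * Y i \<omega> < s * Y j \<omega>"
      proof
        fix i assume "i \<in> S-{j}"
        then have "\<sigma> i \<in> S - {c}" using \<sigma>S[of i] j unfolding \<sigma>_def by auto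
        then show "s * Y i \<omega> < s * Y j \<omega>" using H[rule_format, of "\<sigma> i"] \<sigma>\<sigma>[of i] by simp
      qed
    next
      assume H: "\<forall>i\<in>S-{j}. s * Y i \<omega> < s * Y j \<omega>"
      show "\<forall>i\<in>S-{c}. s * Y (\<sigma> i) \<omega> < s * Y j \<omega>"
      proof
        fix i assume "i \<in> S-{c}"
        then have "\<sigma> i \<in> S - {j}" using \<sigma>S[of i] c unfolding \<sigma>_def by auto
        then show "s * Y (\<sigma> i) \<omega> < s * Y j \<omega>" using H by blast
      qed
    qed
    moreover have "\<sigma> c = j" unfolding \<sigma>_def by simp
    ultimately show ?thesis
      unfolding B_def N_def Z_def using c by (auto simp: space_PiM)
  qed
  ultimately show ?thesis by simp
qed

lemma (in prob_space) tie_null: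
  fixes Y :: "'i \<Rightarrow> 'a \<Rightarrow> real"
  assumes ind: "indep_vars (\<lambda>_. borel) Y S" and i: "i \<in> S" and c: "c \<in> S" and ic: "i \<noteq> c"
    and dist: "distr M borel (Y i) = distr M borel (Y c)"
    and atom: "\<forall>x. measure M {\<omega>\<in>space M. Y c \<omega> = x} = 0"
  shows "prob {\<omega>\<in>space M. Y i \<omega> = Y c \<omega>} = 0"
proof -
  have iv0: "indep_var (\<Pi>\<^sub>M k\<in>{i}. borel) (\<lambda>\<omega>. restrict (\<lambda>k. Y k \<omega>) {i})
      (\<Pi>\<^sub>M k\<in>{c}. borel) (\<lambda>\<omega>. restrict (\<lambda>k. Y k \<omega>) {c})"
    using indep_var_restrict[OF ind, of "{i}" "{c}"] i c ic by auto
  have "indep_var borel ((\<lambda>x. x i) \<circ> (\<lambda>\<omega>. restrict (\<lambda>k. Y k \<omega>) {i}))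
      borel ((\<lambda>x. x c) \<circ> (\<lambda>\<omega>. restrict (\<lambda>k. Y k \<omega>) {c}))"
    by (rule indep_var_compose[OF iv0]) (auto intro: measurable_component_singleton)
  moreover have "((\<lambda>x. x i) \<circ> (\<lambda>\<omega>. restrict (\<lambda>k. Y k \<omega>) {i})) = Y i"
     "((\<lambda>x. x c) \<circ> (\<lambda>\<omega>. restrict (\<lambda>k. Y k \<omega>) {c})) = Y c" by (auto simp: fun_eq_iff)
  ultimately have iv: "indep_var borel (Y i) borel (Y c)" by simp
  define \<mu> where "\<mu> = distr M borel (Y c)"
  have rv: "random_variable borel (Y i)" "random_variable borel (Y c)"
    and eq: "distr M borel (Y i) \<Otimes>\<^sub>M distr M borel (Y c) = distr M (borel \<Otimes>\<^sub>M borel) (\<lambda>x. (Y i x, Y c x))"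
    using iv unfolding indep_var_distribution_eq by auto
  interpret mu: prob_space \<mu> unfolding \<mu>_def by (rule prob_space_distr[OF rv(2)])
  have eq': "\<mu> \<Otimes>\<^sub>M \<mu> = distr M (borel \<Otimes>\<^sub>M borel) (\<lambda>x. (Y i x, Y c x))"
    using eq dist unfolding \<mu>_def by simp
  define D where "D = {p\<in>space (borel \<Otimes>\<^sub>M borel). fst p = (snd p :: real)}"
  have D: "D \<in> sets (borel \<Otimes>\<^sub>M borel)" unfolding D_def by measurable
  have mp: "(\<lambda>x. (Y i x, Y c x)) \<in> measurable M (borel \<Otimes>\<^sub>M borel)"
    using rv by (rule measurable_Pair)
  have "prob {\<omega>\<in>space M. Y i \<omega> = Y c \<omega>} = prob ((\<lambda>x. (Y i x, Y c x)) -` D \<inter> space M)"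
    unfolding D_def by (auto simp: space_pair_measure intro!: arg_cong[where f=prob])
  also have "\<dots> = measure (\<mu> \<Otimes>\<^sub>M \<mu>) D" using measure_distr[OF mp D] eq' by simp
  also have "\<dots> = 0"
  proof -
    have D': "D \<in> sets (\<mu> \<Otimes>\<^sub>M \<mu>)" using D unfolding \<mu>_def by simp
    have "emeasure (\<mu> \<Otimes>\<^sub>M \<mu>) D = (\<integral>\<^sup>+ x. emeasure \<mu> (Pair x -` D) \<partial>\<mu>)"
      by (rule mu.emeasure_pair_measure_alt[OF D'])
    also have "\<dots> = (\<integral>\<^sup>+ x. 0 \<partial>\<mu>)"
    proof (rule nn_integral_cong)
      fix x assume "x \<in> space \<mu>"
      have "Pair x -` D = {x}" unfolding D_def by (auto simp: space_pair_measure)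
      moreover have "emeasure \<mu> {x} = emeasure M (Y c -` {x} \<inter> space M)"
        unfolding \<mu>_def by (rule emeasure_distr[OF rv(2)]) simp
      moreover have "Y c -` {x} \<inter> space M = {\<omega>\<in>space M. Y c \<omega> = x}" by auto
      moreover have "emeasure M {\<omega>\<in>space M. Y c \<omega> = x} = 0"
      proof -
        have "{\<omega>\<in>space M. Y c \<omega> = x} \<in> events" using rv(2) by measurable
        then show ?thesis using atom emeasure_eq_measure by simp
      qed
      ultimately show "emeasure \<mu> (Pair x -` D) = 0" by simp
    qed
    finally show ?thesis by (simp add: measure_def)
  qed
  finally show ?thesis .
qed

lemma (in prob_space) weak_extreme_bound:
  fixes Y :: "'i \<Rightarrow> 'a \<Rightarrow> real" and s :: real
  assumes ind: "indep_vars (\<lambda>_. borel) Y S" and fin: "finite S" and c: "c \<in> S"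
    and dist: "\<forall>i\<in>S. distr M borel (Y i) = distr M borel (Y c)"
    and atom: "\<forall>x. measure M {\<omega>\<in>space M. Y c \<omega> = x} = 0"
    and s: "s \<noteq> 0"
  shows "{\<omega>\<in>space M. \<forall>i\<in>S-{c}. s * Y i \<omega> \<le> s * Y c \<omega>} \<in> events"
    "prob {\<omega>\<in>space M. \<forall>i\<in>S-{c}. s * Y i \<omega> \<le> s * Y c \<omega>} \<le> 1 / card S"
proof -
  have rv: "random_variable borel (Y i)" if "i \<in> S" for i
    using ind that unfolding indep_vars_def by auto
  define E where "E j = {\<omega>\<in>space M. \<forall>i\<in>S-{j}. s * Y i \<omega> < s * Y j \<omega>}" for j
  define W where "W = {\<omega>\<in>space M. \<forall>i\<in>S-{c}. s * Y i \<omega> \<le> s * Y c \<omega>}"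
  define tie where "tie i = {\<omega>\<in>space M. Y i \<omega> = Y c \<omega>}" for i
  have E: "E j \<in> events" if j: "j \<in> S" for j
  proof -
    have "Measurable.pred M (\<lambda>\<omega>. \<forall>i\<in>S-{j}. s * Y i \<omega> < s * Y j \<omega>)"
    proof (rule pred_intros_finite)
      show "finite (S - {j})" using fin by simp
      fix i assume "i \<in> S - {j}"
      then have [measurable]: "Y i \<in> borel_measurable M" using rv by auto
      have [measurable]: "Y j \<in> borel_measurable M" using rv j by auto
      show "Measurable.pred M (\<lambda>\<omega>. s * Y i \<omega> < s * Y j \<omega>)" by measurable
    qed
    then show ?thesis unfolding E_def by (simp add: pred_def)
  qed
  have W: "W \<in> events"
  proof -
    have "Measurable.pred M (\<lambda>\<omega>. \<forall>i\<in>S-{c}. s * Y i \<omega> \<le> s * Y c \<omega>)"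
    proof (rule pred_intros_finite)
      show "finite (S - {c})" using fin by simp
      fix i assume "i \<in> S - {c}"
      then have [measurable]: "Y i \<in> borel_measurable M" using rv by auto
      have [measurable]: "Y c \<in> borel_measurable M" using rv c by auto
      show "Measurable.pred M (\<lambda>\<omega>. s * Y i \<omega> \<le> s * Y c \<omega>)" by measurable
    qed
    then show ?thesis unfolding W_def by (simp add: pred_def)
  qed
  have tie: "tie i \<in> events" if "i \<in> S" for i
  proof -
    have [measurable]: "Y i \<in> borel_measurable M" "Y c \<in> borel_measurable M" using rv c that by auto
    show ?thesis unfolding tie_def by measurable
  qed
  have tie0: "prob (tie i) = 0" if "i \<in> S - {c}" for i
    unfolding tie_def using tie_null[OF ind _ c _ _ atom, of i] that dist by auto
  have eqE: "prob (E j) = prob (E c)" if "j \<in> S" for j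
    unfolding E_def by (rule strict_extreme_eq[OF ind fin c that dist])
  have disj: "disjoint_family_on E S"
    unfolding disjoint_family_on_def E_def by (auto dest: less_asym)
  have "(\<Sum>j\<in>S. prob (E j)) = prob (\<Union>j\<in>S. E j)"
    using E disj fin by (intro measure_finite_Union[symmetric]) auto
  also have "\<dots> \<le> 1" by simp
  finally have "real (card S) * prob (E c) \<le> 1" using eqE by simp
  moreover have "card S > 0" using fin c by (auto simp: card_gt_0_iff)
  ultimately have Ec: "prob (E c) \<le> 1 / card S" by (simp add: field_simps)
  have sub: "W \<subseteq> E c \<union> (\<Union>i\<in>S-{c}. tie i)"
  proof
    fix \<omega> assume w: "\<omega> \<in> W"
    show "\<omega> \<in> E c \<union> (\<Union>i\<in>S-{c}. tie i)"
    proof (cases "\<omega> \<in> E c")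
      case False
      then obtain i where i: "i \<in> S - {c}" "\<not> s * Y i \<omega> < s * Y c \<omega>" using w unfolding E_def W_def by auto
      then have "s * Y i \<omega> = s * Y c \<omega>" using w unfolding W_def by force
      then have "Y i \<omega> = Y c \<omega>" using s by simp
      then show ?thesis using i w unfolding tie_def W_def by auto
    qed simp
  qed
  have "prob W \<le> prob (E c \<union> (\<Union>i\<in>S-{c}. tie i))"
    using sub E[OF c] tie fin by (intro finite_measure_mono) auto
  also have "\<dots> \<le> prob (E c) + prob (\<Union>i\<in>S-{c}. tie i)"
    using E[OF c] tie fin by (intro measure_subadditive) auto
  also have "prob (\<Union>i\<in>S-{c}. tie i) \<le> (\<Sum>i\<in>S-{c}. prob (tie i))"
    using tie fin by (intro finite_measure_subadditive_finite) auto
  also have "(\<Sum>i\<in>S-{c}. prob (tie i)) = 0" using tie0 by simp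
  finally show "prob W \<le> 1 / card S" using Ec by simp
  show "W \<in> events" by (rule W)
qed

theorem theorem2:
  fixes M :: "'w measure"
    and U :: "real ^ 'd::finite ^ 'v::finite"
    and r :: "real ^ 'd"
    and c :: 'v and S :: "'v set" and T :: nat
    and \<epsilon> lam re \<sigma> :: real
    and v :: "'w \<Rightarrow> real ^ 'd"
  defines "P \<equiv> softmax (U *v r)"
    and "X \<equiv> (\<lambda>i \<omega>. v \<omega> \<bullet> (U $ i))"
  assumes "prob_space M"
    and "P c < 1"
    and "c \<in> S" and "card S = T" and "T \<ge> 3"
    and "(\<Sum>i\<in>S - {c}. P i) > 0"
    and "(\<Sum>i\<in>S - {c}. P i) = (1 - \<epsilon>) * (1 - P c)"
    and "0 \<le> \<epsilon>" and "\<epsilon> < 1"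
    and "re \<noteq> 0" and "lam > 0"
    and "v \<in> borel_measurable M"
    and "\<forall>\<omega>\<in>space M. norm (v \<omega>) = 1"
    and "prob_space.indep_vars M (\<lambda>_. borel) X S"
    and "\<forall>i\<in>S. distr M borel (X i) = distr M borel (X c)"
    and "\<forall>x. measure M {\<omega> \<in> space M. X c \<omega> = x} = 0"
    and "integrable M (\<lambda>\<omega>. (X c \<omega>)\<^sup>2)"
    and "\<sigma> > 0"
    and "(\<integral>\<omega>. (X c \<omega> - (\<integral>\<omega>'. X c \<omega>' \<partial>M))\<^sup>2 \<partial>M) = \<sigma>\<^sup>2"
  shows "\<exists>A\<in>sets M. measure M A \<ge> 1 - 2 / real T \<and>
    (\<forall>\<omega>\<in>A.
       let Xw = (\<lambda>i. X i \<omega>);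
           Ip = Iplus S c Xw; Im = Iminus S c Xw;
           \<alpha> = min (Pmass P Ip) (Pmass P Im) / ((1 - P c) * (1 - \<epsilon>));
           \<beta> = min \<bar>cmean P Xw c Im\<bar> (cmean P Xw c Ip) / \<sigma>
       in Ip \<noteq> {} \<and> Im \<noteq> {} \<and> \<alpha> > 0 \<and> \<beta> > 0 \<and>
          softmax (U *v (r + (lam * \<bar>re\<bar>) *\<^sub>R v \<omega>)) c
            \<le> P c / (P c + (1 - P c) * \<alpha> * (1 - \<epsilon>) *
                       (1 + lam\<^sup>2 * \<sigma>\<^sup>2 * \<beta>\<^sup>2 / 2 * re\<^sup>2)))"
proof -
  interpret prob_space M by fact
  note ind = assms(16)
  have fin: "finite S" by simp
  have Ppos: "\<forall>t. P t > 0" unfolding P_def using softmax_pos by blast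
  have dist: "\<forall>i\<in>S. distr M borel (X i) = distr M borel (X c)" using assms(17) .
  have atom: "\<forall>x. measure M {\<omega>\<in>space M. X c \<omega> = x} = 0" using assms(18) .
  define Wp where "Wp = {\<omega>\<in>space M. \<forall>i\<in>S-{c}. 1 * X i \<omega> \<le> 1 * X c \<omega>}"
  define Wm where "Wm = {\<omega>\<in>space M. \<forall>i\<in>S-{c}. (-1) * X i \<omega> \<le> (-1) * X c \<omega>}"
  have Wp: "Wp \<in> events" "prob Wp \<le> 1 / T"
    using weak_extreme_bound[OF ind fin assms(5) dist atom, of 1] assms(6) unfolding Wp_def by auto
  have Wm: "Wm \<in> events" "prob Wm \<le> 1 / T"
    using weak_extreme_bound[OF ind fin assms(5) dist atom, of "-1"] assms(6) unfolding Wm_def by auto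
  define A where "A = space M - (Wp \<union> Wm)"
  have A: "A \<in> sets M" unfolding A_def using Wp Wm by auto
  have "prob (Wp \<union> Wm) \<le> prob Wp + prob Wm"
    using Wp Wm by (intro measure_subadditive) auto
  then have "prob A \<ge> 1 - 2 / real T"
    unfolding A_def using prob_compl[of "Wp \<union> Wm"] Wp Wm by auto
  moreover have "\<forall>\<omega>\<in>A.
       let Xw = (\<lambda>i. X i \<omega>);
           Ip = Iplus S c Xw; Im = Iminus S c Xw;
           \<alpha> = min (Pmass P Ip) (Pmass P Im) / ((1 - P c) * (1 - \<epsilon>));
           \<beta> = min \<bar>cmean P Xw c Im\<bar> (cmean P Xw c Ip) / \<sigma>
       in Ip \<noteq> {} \<and> Im \<noteq> {} \<and> \<alpha> > 0 \<and> \<beta> > 0 \<and>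
          softmax (U *v (r + (lam * \<bar>re\<bar>) *\<^sub>R v \<omega>)) c
            \<le> P c / (P c + (1 - P c) * \<alpha> * (1 - \<epsilon>) *
                       (1 + lam\<^sup>2 * \<sigma>\<^sup>2 * \<beta>\<^sup>2 / 2 * re\<^sup>2))"
  proof
    fix \<omega> assume w: "\<omega> \<in> A"
    define Xw where "Xw = (\<lambda>i. X i \<omega>)"
    define Ip where "Ip = Iplus S c Xw"
    define Im where "Im = Iminus S c Xw"
    define m where "m = min (Pmass P Ip) (Pmass P Im)"
    define mn where "mn = min \<bar>cmean P Xw c Im\<bar> (cmean P Xw c Ip)"
    define k where "k = lam * \<bar>re\<bar>"
    have Ip: "Ip \<noteq> {}"
    proof -
      from w obtain i where "i \<in> S - {c}" "\<not> X i \<omega> \<le> X c \<omega>" unfolding A_def Wp_def by auto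
      then show ?thesis unfolding Ip_def Iplus_def Xw_def by auto
    qed
    have Im: "Im \<noteq> {}"
    proof -
      from w obtain i where "i \<in> S - {c}" "\<not> X i \<omega> \<ge> X c \<omega>" unfolding A_def Wm_def by auto
      then show ?thesis unfolding Im_def Iminus_def Xw_def by auto
    qed
    have m: "m > 0" unfolding m_def Ip_def Im_def
      using mass_pos[OF Ppos Ip[unfolded Ip_def]] mass_pos[OF Ppos Im[unfolded Im_def]] by simp
    have mn: "mn > 0" unfolding mn_def
      using cmean_plus_pos[OF Ppos Ip[unfolded Ip_def]] cmean_minus_neg[OF Ppos Im[unfolded Im_def]]
      unfolding Ip_def Im_def by simp
    have den: "(1 - P c) * (1 - \<epsilon>) > 0" using assms(4) assms(11) by simp
    have k: "k \<ge> 0" unfolding k_def using assms(13) by simp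
    have eq1: "(1 - P c) * (m / ((1 - P c) * (1 - \<epsilon>))) * (1 - \<epsilon>) = m"
      using den by (simp add: field_simps)
    have eq2: "lam\<^sup>2 * \<sigma>\<^sup>2 * (mn / \<sigma>)\<^sup>2 / 2 * re\<^sup>2 = (k * mn)\<^sup>2 / 2"
      unfolding k_def using assms(20) by (simp add: field_simps power_mult_distrib)
    have "softmax (U *v (r + k *\<^sub>R v \<omega>)) c
        = P c / (\<Sum>t\<in>UNIV. P t * exp (k * (Xw t - Xw c)))"
      unfolding P_def Xw_def X_def by (rule softmax_shift)
    also have "\<dots> \<le> P c / (P c + m * (1 + (k * mn)\<^sup>2 / 2))"
      using det_bound[OF Ppos k Ip[unfolded Ip_def] Im[unfolded Im_def]]
      unfolding m_def mn_def Ip_def Im_def .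
    finally have ineq: "softmax (U *v (r + k *\<^sub>R v \<omega>)) c \<le> P c / (P c + m * (1 + (k * mn)\<^sup>2 / 2))" .
    show "let Xw = (\<lambda>i. X i \<omega>);
           Ip = Iplus S c Xw; Im = Iminus S c Xw;
           \<alpha> = min (Pmass P Ip) (Pmass P Im) / ((1 - P c) * (1 - \<epsilon>));
           \<beta> = min \<bar>cmean P Xw c Im\<bar> (cmean P Xw c Ip) / \<sigma>
       in Ip \<noteq> {} \<and> Im \<noteq> {} \<and> \<alpha> > 0 \<and> \<beta> > 0 \<and>
          softmax (U *v (r + (lam * \<bar>re\<bar>) *\<^sub>R v \<omega>)) c
            \<le> P c / (P c + (1 - P c) * \<alpha> * (1 - \<epsilon>) *
                       (1 + lam\<^sup>2 * \<sigma>\<^sup>2 * \<beta>\<^sup>2 / 2 * re\<^sup>2))"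
      unfolding Let_def Xw_def[symmetric] Ip_def[symmetric] Im_def[symmetric] m_def[symmetric]
        mn_def[symmetric] k_def[symmetric] eq1 eq2
      using Ip Im m mn den ineq assms(20) by simp
  qed
  ultimately show ?thesis using A by blast
qed

end
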